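(* Let $\gamma\in\mathbb{R}$ and $|a|$ small. For every $\tau\in(-1/2,1/2]\setminus\{0\}$, the $L^2(\mathbb{T})$-spectrum of $\mathcal H_a(\gamma,\tau)$ is symmetric with respect to reflection through the imaginary axis: if $\mu$ is in the spectrum, so is $-\overline{\mu}$.
   Context: Here $\rho,\phi\in\mathbb{R}$, $k>0$, and $w$, $c$ describe the small-amplitude periodic traveling wave of the Konopelchenko–Dubrovsky equation: $w$ is smooth, real, even and $2\pi$-periodic, $w(z)=a\cos z+a^2(A_0+A_2\cos 2z)+a^3A_3\cos 3z+O(a^4)$, $c=k^2+a^2c_2+O(a^4)$, with $A_0=-\frac{3\rho}{2k^2}$, $A_2=\frac{\rho}{2k^2}$, $A_3=-\frac{\phi^2}{64k^2}+\frac{3\rho^2}{16k^4}$, $c_2=\frac{3\phi^2}{8}+\frac{15\rho^2}{2k^2}$. The operator $\mathcal H_a(\gamma,\tau)=kc(\partial_z+i\tau)+k^3(\partial_z+i\tau)^3+6k\rho(\partial_z+i\tau)(w\,\cdot)-\tfrac32\phi^2k(\partial_z+i\tau)(w^2\,\cdot)-\big(\frac{3\gamma^2}{k}+3i\phi\gamma w_z\big)(\partial_z+i\tau)^{-1}$ acts in $L^2(\mathbb{T})$ ($2\pi$-periodic square-integrable functions). *)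

theory Defs
  imports "HOL-Analysis.Analysis"
begin

definition per2pi :: "(real \<Rightarrow> 'a) \<Rightarrow> bool" where
  "per2pi f \<longleftrightarrow> (\<forall>x. f (x + 2 * pi) = f x)"

text \<open>Elements of L2(T), represented by 2pi-periodic complex functions that are
  measurable and square integrable over one period; they are identified when equal
  almost everywhere.\<close>
definition L2T :: "(real \<Rightarrow> complex) \<Rightarrow> bool" where
  "L2T f \<longleftrightarrow> per2pi f \<and> f measurable_on {0..2*pi}
      \<and> (\<lambda>x. (cmod (f x))^2) integrable_on {0..2*pi}"

definition L2norm :: "(real \<Rightarrow> complex) \<Rightarrow> real" where
  "L2norm f = sqrt (integral {0..2*pi} (\<lambda>x. (cmod (f x))^2))"

definition ae_eq :: "(real \<Rightarrow> complex) \<Rightarrow> (real \<Rightarrow> complex) \<Rightarrow> bool" where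
  "ae_eq f g \<longleftrightarrow> negligible {x \<in> {0..2*pi}. f x \<noteq> g x}"

text \<open>Periodic Sobolev space H^3(T): f is C^2 with derivatives f1, f2, and f2 is
  absolutely continuous with (a.e.) derivative f3 in L2(T).\<close>
definition H3T :: "(real \<Rightarrow> complex) \<Rightarrow> (real \<Rightarrow> complex) \<Rightarrow> (real \<Rightarrow> complex)
     \<Rightarrow> (real \<Rightarrow> complex) \<Rightarrow> bool" where
  "H3T f f1 f2 f3 \<longleftrightarrow> per2pi f
     \<and> (\<forall>x. (f has_vector_derivative f1 x) (at x))
     \<and> (\<forall>x. (f1 has_vector_derivative f2 x) (at x))
     \<and> L2T f3
     \<and> (\<forall>x y. x \<le> y \<longrightarrow> (f3 has_integral (f2 y - f2 x)) {x..y})"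

definition smooth_fun :: "(real \<Rightarrow> real) \<Rightarrow> bool" where
  "smooth_fun u \<longleftrightarrow> (\<exists>D. D 0 = u \<and> (\<forall>n x. (D n has_real_derivative D (Suc n) x) (at x)))"

text \<open>The inverse of (d/dz + i tau) on (continuous) 2pi-periodic functions,
  tau not an integer: the unique periodic solution F of F' + i tau F = f.\<close>
definition Dinv :: "real \<Rightarrow> (real \<Rightarrow> complex) \<Rightarrow> (real \<Rightarrow> complex)" where
  "Dinv \<tau> f = (THE F. per2pi F \<and>
      (\<forall>x. (F has_vector_derivative (f x - \<i> * complex_of_real \<tau> * F x)) (at x)))"

text \<open>The operator H_a(gamma,tau) applied to f in H^3(T) (with derivatives f1,f2,f3),
  written with D = d/dz + i tau:
  kc D f + k^3 D^3 f + 6 k rho D(w f) - 3/2 phi^2 k D(w^2 f)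
   - (3 gamma^2/k + 3 i phi gamma w_z) D^{-1} f.\<close>
definition Hop :: "real \<Rightarrow> real \<Rightarrow> real \<Rightarrow> real \<Rightarrow> real \<Rightarrow> (real \<Rightarrow> real) \<Rightarrow> real
     \<Rightarrow> (real \<Rightarrow> complex) \<Rightarrow> (real \<Rightarrow> complex) \<Rightarrow> (real \<Rightarrow> complex) \<Rightarrow> (real \<Rightarrow> complex)
     \<Rightarrow> (real \<Rightarrow> complex)" where
  "Hop k c \<rho> \<phi> \<gamma> w \<tau> f f1 f2 f3 = (\<lambda>x.
     let t = complex_of_real \<tau>; W = complex_of_real (w x);
         Wz = complex_of_real (deriv w x);
         Df = f1 x + \<i> * t * f x;
         D3f = f3 x + 3 * \<i> * t * f2 x - 3 * t^2 * f1 x - \<i> * t^3 * f x;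
         Dwf = Wz * f x + W * f1 x + \<i> * t * W * f x;
         Dw2f = 2 * W * Wz * f x + W^2 * f1 x + \<i> * t * W^2 * f x
     in complex_of_real (k * c) * Df + complex_of_real (k^3) * D3f
        + complex_of_real (6 * k * \<rho>) * Dwf
        - complex_of_real (3/2 * \<phi>^2 * k) * Dw2f
        - (complex_of_real (3 * \<gamma>^2 / k) + 3 * \<i> * complex_of_real (\<phi> * \<gamma>) * Wz)
            * Dinv \<tau> f x)"

definition resolvent_H :: "real \<Rightarrow> real \<Rightarrow> real \<Rightarrow> real \<Rightarrow> real \<Rightarrow> (real \<Rightarrow> real) \<Rightarrow> real
     \<Rightarrow> complex set" where
  "resolvent_H k c \<rho> \<phi> \<gamma> w \<tau> = {\<mu>.
     (\<forall>g. L2T g \<longrightarrow> (\<exists>f f1 f2 f3. H3T f f1 f2 f3 \<and>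
          ae_eq (\<lambda>x. Hop k c \<rho> \<phi> \<gamma> w \<tau> f f1 f2 f3 x - \<mu> * f x) g))
   \<and> (\<forall>f f1 f2 f3. H3T f f1 f2 f3 \<longrightarrow>
          ae_eq (\<lambda>x. Hop k c \<rho> \<phi> \<gamma> w \<tau> f f1 f2 f3 x - \<mu> * f x) (\<lambda>x. 0) \<longrightarrow>
          ae_eq f (\<lambda>x. 0))
   \<and> (\<exists>C. \<forall>f f1 f2 f3. H3T f f1 f2 f3 \<longrightarrow>
          L2norm f \<le> C * L2norm (\<lambda>x. Hop k c \<rho> \<phi> \<gamma> w \<tau> f f1 f2 f3 x - \<mu> * f x))}"

definition spectrum_H :: "real \<Rightarrow> real \<Rightarrow> real \<Rightarrow> real \<Rightarrow> real \<Rightarrow> (real \<Rightarrow> real) \<Rightarrow> real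
     \<Rightarrow> complex set" where
  "spectrum_H k c \<rho> \<phi> \<gamma> w \<tau> = - resolvent_H k c \<rho> \<phi> \<gamma> w \<tau>"

end

theory Submission
  imports Defs
begin

lemma e_deriv: "((\<lambda>x::real. exp (\<i> * complex_of_real t * of_real x)) has_vector_derivative (\<i> * of_real t * exp(\<i> * of_real t * of_real x))) (at x)"
proof -
  have "((\<lambda>z. exp (\<i> * complex_of_real t * z)) has_field_derivative (\<i> * of_real t * exp(\<i> * of_real t * of_real x))) (at (of_real x))"
    by (auto intro!: derivative_eq_intros)
  from has_vector_derivative_real_field[OF this] show ?thesis .
qed

lemma refl_deriv:
  assumes "(F has_vector_derivative D) (at (2*pi - x))"
  shows "((\<lambda>x. cnj (F (2*pi - x))) has_vector_derivative (- cnj D)) (at x)"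
proof -
  have "((\<lambda>x::real. 2*pi - x) has_vector_derivative (-1)) (at x)"
    by (auto intro!: derivative_eq_intros)
  from vector_diff_chain_at[OF this assms[folded]] 
  have "((F \<circ> (\<lambda>x. 2*pi - x)) has_vector_derivative (-1) *\<^sub>R D) (at x)" by simp
  from has_vector_derivative_cnj[OF this] show ?thesis by (simp add: o_def)
qed

lemma antideriv_UNIV:
  fixes g :: "real \<Rightarrow> 'a::banach"
  assumes cont: "continuous_on UNIV g"
  shows "\<exists>G. \<forall>x. (G has_vector_derivative g x) (at x)"
proof -
  define G where "G u = integral {0..u} g - integral {u..0} g" for u
  have int: "g integrable_on {a..b}" for a b
    using integrable_continuous_real continuous_on_subset cont by blast
  have eq: "G u = integral {a..u} g - integral {a..0} g" if "a \<le> u" "a \<le> 0" for a u :: real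
  proof (cases "0 \<le> u")
    case True
    have "integral {a..0} g + integral {0..u} g = integral {a..u} g"
      using Henstock_Kurzweil_Integration.integral_combine[OF that(2) True int] .
    moreover have "integral {u..0} g = 0" using True by (cases "u=0") auto
    ultimately show ?thesis by (simp add: G_def algebra_simps)
  next
    case False
    have "integral {a..u} g + integral {u..0} g = integral {a..0} g"
      using Henstock_Kurzweil_Integration.integral_combine[OF that(1) _ int] False by simp
    moreover have "integral {0..u} g = 0" using False by simp
    ultimately show ?thesis by (simp add: G_def algebra_simps)
  qed
  show ?thesis
  proof (intro exI allI)
    fix x :: real
    define a where "a = min x 0 - 1"
    have xin: "x \<in> {a<..<x+1}" by (simp add: a_def)
    have "((\<lambda>u. integral {a..u} g) has_vector_derivative g x) (at x within {a..x+1})"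
      using integral_has_vector_derivative[of a "x+1" g x] continuous_on_subset[OF cont] a_def by auto
    then have "((\<lambda>u. integral {a..u} g) has_vector_derivative g x) (at x within {a<..<x+1})"
      by (rule has_vector_derivative_within_subset) auto
    then have "((\<lambda>u. integral {a..u} g) has_vector_derivative g x) (at x)"
      using has_vector_derivative_within_open[OF xin open_greaterThanLessThan] by blast
    then have D: "((\<lambda>u. integral {a..u} g - integral {a..0} g) has_vector_derivative g x) (at x)"
      using has_vector_derivative_diff[OF _ has_vector_derivative_const] by fastforce
    
    have E: "integral {a..y} g - integral {a..0} g = G y" if "y \<in> {a<..}" for y
    proof -
      have "a \<le> y" "a \<le> 0" using that by (auto simp: a_def)
      then show ?thesis using eq[of a y] by simp
    qed
    have "x \<in> {a<..}" by (simp add: a_def)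
    then show "(G has_vector_derivative g x) (at x)"
      using has_vector_derivative_transform_within_open[OF D open_greaterThan _ E] by blast
  qed
qed

definition Psol :: "real \<Rightarrow> (real \<Rightarrow> complex) \<Rightarrow> (real \<Rightarrow> complex) \<Rightarrow> bool" where
  "Psol t h F \<longleftrightarrow> per2pi F \<and>
      (\<forall>x. (F has_vector_derivative (h x - \<i> * complex_of_real t * F x)) (at x))"

lemma Psol_unique:
  assumes q: "exp (\<i> * complex_of_real t * of_real (2*pi)) \<noteq> 1"
    and F: "Psol t h F" and G: "Psol t h G"
  shows "F = G"
proof -
  define e where "e x = exp (\<i> * complex_of_real t * of_real x)" for x :: real
  define M where "M x = e x * (F x - G x)" for x
  have Mder: "(M has_vector_derivative 0) (at x within UNIV)" if "x \<in> UNIV" for x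
  proof -
    have dF: "(F has_vector_derivative (h x - \<i> * complex_of_real t * F x)) (at x)"
      using F by (simp add: Psol_def)
    have dG: "(G has_vector_derivative (h x - \<i> * complex_of_real t * G x)) (at x)"
      using G by (simp add: Psol_def)
    have "(M has_vector_derivative (e x * ((h x - \<i> * complex_of_real t * F x) - (h x - \<i> * complex_of_real t * G x))
        + (\<i> * of_real t * e x) * (F x - G x))) (at x)"
      unfolding M_def e_def by (intro has_vector_derivative_mult has_vector_derivative_diff dF dG e_deriv)
    moreover have "e x * ((h x - \<i> * complex_of_real t * F x) - (h x - \<i> * complex_of_real t * G x))
        + (\<i> * of_real t * e x) * (F x - G x) = 0"
      by (simp add: algebra_simps)
    ultimately show ?thesis by simp
  qed
  obtain c where c0: "\<And>x. x \<in> UNIV \<Longrightarrow> M x = c"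
    using has_vector_derivative_zero_constant[OF convex_UNIV Mder] by metis
  have c: "M x = c" for x using c0 by simp
  have "F (0 + 2*pi) = F 0" "G (0 + 2*pi) = G 0"
    using F G unfolding Psol_def per2pi_def by blast+
  then have per: "F (2*pi) = F 0" "G (2*pi) = G 0" by simp_all
  have "M (2*pi) = M 0" using c by simp
  then have "e (2*pi) * (F 0 - G 0) = F 0 - G 0"
    by (simp add: M_def per e_def)
  then have "(e (2*pi) - 1) * (F 0 - G 0) = 0" by (simp add: algebra_simps)
  moreover have "e (2*pi) - 1 \<noteq> 0" using q by (simp add: e_def)
  ultimately have "F 0 - G 0 = 0" by simp
  then have "c = 0" using c[of 0] by (simp add: M_def)
  then have "e x * (F x - G x) = 0" for x using c[of x] by (simp add: M_def)
  moreover have "e x \<noteq> 0" for x by (simp add: e_def)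
  ultimately show "F = G" by (intro ext) simp
qed


lemma Psol_exists:
  assumes q: "exp (\<i> * complex_of_real t * of_real (2*pi)) \<noteq> 1"
    and hp: "per2pi h" and hc: "continuous_on UNIV h"
  shows "\<exists>F. Psol t h F"
proof -
  define e where "e s x = exp (\<i> * complex_of_real s * of_real x)" for s x :: real
  define q where "q = e t (2*pi)"
  have eadd: "e s (x + y) = e s x * e s y" for s x y
    by (simp add: e_def distrib_left exp_add)
  have emul: "e (-s) x * e s x = 1" for s x
    by (simp add: e_def exp_add[symmetric])
  have gc: "continuous_on UNIV (\<lambda>x. e t x * h x)"
    unfolding e_def by (intro continuous_intros hc)
  obtain G where G: "\<And>x. (G has_vector_derivative (e t x * h x)) (at x)"
    using antideriv_UNIV[OF gc] by blast
  define K where "K x = G (x + 2*pi) - q * G x" for x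
  have Kder: "(K has_vector_derivative 0) (at x within UNIV)" if "x \<in> UNIV" for x
  proof -
    have s: "((\<lambda>x::real. x + 2*pi) has_vector_derivative 1) (at x)"
      by (auto intro!: derivative_eq_intros)
    have "((G \<circ> (\<lambda>x. x + 2*pi)) has_vector_derivative (1::real) *\<^sub>R (e t (x + 2*pi) * h (x + 2*pi))) (at x)"
      by (rule vector_diff_chain_at[OF s G])
    then have "(K has_vector_derivative (e t (x + 2*pi) * h (x + 2*pi) - q * (e t x * h x))) (at x)"
      unfolding K_def using has_vector_derivative_diff[OF _ has_vector_derivative_mult_right[OF G]]
      by (simp add: o_def)
    moreover have "e t (x + 2*pi) * h (x + 2*pi) - q * (e t x * h x) = 0"
      using hp by (simp add: eadd q_def per2pi_def algebra_simps)
    ultimately show ?thesis by simp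
  qed
  obtain K00 where K00: "\<And>x. x \<in> UNIV \<Longrightarrow> K x = K00"
    using has_vector_derivative_zero_constant[OF convex_UNIV Kder] by metis
  define K0 where "K0 = K00"
  have K0: "K x = K0" for x using K00 K0_def by simp
  have q1: "q - 1 \<noteq> 0" using q by (simp add: q_def e_def)
  define C where "C = K0 / (q - 1)"
  have C: "C * (q - 1) = K0" using q1 by (simp add: C_def)
  define F where "F x = e (-t) x * (C + G x)" for x
  have rq: "e (-t) (2*pi) * q = 1" using emul by (simp add: q_def)
  have "Psol t h F"
    unfolding Psol_def per2pi_def
  proof (intro conjI allI)
    fix x
    have "G (x + 2*pi) = q * G x + C * (q - 1)" using K0[of x] C by (simp add: K_def algebra_simps)
    then have "F (x + 2*pi) = e (-t) x * (e (-t) (2*pi) * (C + q * G x + C * (q - 1)))"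
      by (simp add: F_def eadd)
    also have "e (-t) (2*pi) * (C + q * G x + C * (q - 1)) = (e (-t) (2*pi) * q) * (C + G x)"
      by (simp add: algebra_simps)
    finally show "F (x + 2*pi) = F x" by (simp add: rq F_def)
  next
    fix x
    have "(F has_vector_derivative (e (-t) x * (e t x * h x) + (\<i> * of_real (-t) * e (-t) x) * (C + G x))) (at x)"
    proof -
      have dCG: "((\<lambda>x. C + G x) has_vector_derivative (e t x * h x)) (at x)"
        using has_vector_derivative_add[OF has_vector_derivative_const G] by simp
      show ?thesis unfolding F_def using has_vector_derivative_mult[OF e_deriv[of "-t" x] dCG]
        by (simp add: e_def)
    qed
    moreover have "e (-t) x * (e t x * h x) + (\<i> * of_real (-t) * e (-t) x) * (C + G x)
        = h x - \<i> * complex_of_real t * F x"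
    proof -
      have "e (-t) x * (e t x * h x) = (e (-t) x * e t x) * h x" by (simp add: algebra_simps)
      then show ?thesis using emul[of t x] by (simp add: F_def algebra_simps)
    qed
    ultimately show "(F has_vector_derivative (h x - \<i> * complex_of_real t * F x)) (at x)" by simp
  qed
  then show ?thesis by blast
qed


lemma Dinv_Psol:
  assumes q: "exp (\<i> * complex_of_real t * of_real (2*pi)) \<noteq> 1"
    and hp: "per2pi h" and hc: "continuous_on UNIV h"
  shows "Psol t h (Dinv t h)"
proof -
  obtain F where F: "Psol t h F" using Psol_exists[OF q hp hc] by blast
  have "Dinv t h = F" unfolding Dinv_def
    using F Psol_unique[OF q] unfolding Psol_def[symmetric] by blast
  with F show ?thesis by simp
qed

definition rf :: "real \<Rightarrow> (real \<Rightarrow> complex) \<Rightarrow> real \<Rightarrow> complex" where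
  "rf \<sigma> h x = complex_of_real \<sigma> * cnj (h (2*pi - x))"

lemma rf_m1_1: "rf (-1) (rf 1 h) = (\<lambda>x. - h x)"
  by (rule ext) (simp add: rf_def)

lemma rf_1_1: "rf 1 (rf 1 h) = h" "rf (-1) (rf (-1) h) = h"
  by (rule ext, simp add: rf_def)+

lemma rf_0: "rf \<sigma> (\<lambda>x. 0) = (\<lambda>x. 0)"
  by (rule ext) (simp add: rf_def)

lemma img_refl: "(\<lambda>x::real. c - x) ` {a..b} = {c-b..c-a}"
proof
  show "(\<lambda>x::real. c - x) ` {a..b} \<subseteq> {c-b..c-a}" by auto
  show "{c-b..c-a} \<subseteq> (\<lambda>x::real. c - x) ` {a..b}"
  proof
    fix y assume "y \<in> {c-b..c-a}"
    then have "c - y \<in> {a..b}" "y = c - (c - y)" by auto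
    then show "y \<in> (\<lambda>x::real. c - x) ` {a..b}" by blast
  qed
qed

lemma hi_refl:
  fixes k :: "real \<Rightarrow> 'b::real_normed_vector"
  assumes "(k has_integral i) {a..b}"
  shows "((\<lambda>s. k (c - s)) has_integral i) {c-b..c-a}"
proof -
  have "(k has_integral i) (cbox a b)" using assms by simp
  from has_integral_affinity[OF this, of "-1" c]
  have "((\<lambda>x. k (- x + c)) has_integral i) ((\<lambda>x. - x + c) ` cbox a b)" by simp
  moreover have "(\<lambda>x. - x + c) ` cbox a b = {c-b..c-a}"
    using img_refl[of c a b] by (simp add: algebra_simps)
  ultimately show ?thesis by (simp add: algebra_simps)
qed

lemma hi_refl_iff:
  fixes k :: "real \<Rightarrow> 'b::real_normed_vector"
  shows "((\<lambda>s. k (c - s)) has_integral i) {c-b..c-a} \<longleftrightarrow> (k has_integral i) {a..b}"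
proof
  assume "((\<lambda>s. k (c - s)) has_integral i) {c-b..c-a}"
  from hi_refl[OF this, of c] show "(k has_integral i) {a..b}" by simp
qed (rule hi_refl)

lemma integral_refl:
  fixes k :: "real \<Rightarrow> 'b::banach"
  shows "integral {c-b..c-a} (\<lambda>s. k (c - s)) = integral {a..b} k"
proof (cases "k integrable_on {a..b}")
  case True
  have "(k has_integral integral {a..b} k) {a..b}" using True by (rule integrable_integral)
  from hi_refl[OF this, of c] show ?thesis by (rule integral_unique)
next
  case False
  then have "\<not> (\<lambda>s. k (c - s)) integrable_on {c-b..c-a}"
    using hi_refl_iff[where k=k and c=c and b=b and a=a] by (auto simp: integrable_on_def)
  with False show ?thesis by (simp add: not_integrable_integral)
qed

lemma integrable_refl:
  fixes k :: "real \<Rightarrow> 'b::real_normed_vector"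
  shows "(\<lambda>s. k (c - s)) integrable_on {c-b..c-a} \<longleftrightarrow> k integrable_on {a..b}"
  using hi_refl_iff[where k=k and c=c and b=b and a=a] by (auto simp: integrable_on_def)

lemma negligible_refl:
  assumes "negligible (N :: real set)"
  shows "negligible ((\<lambda>x. c - x) ` N)"
proof (rule negligible_locally_Lipschitz_image)
  show "DIM(real) \<le> DIM(real)" by simp
  show "negligible N" by fact
  fix x assume "x \<in> N"
  show "\<exists>T B. open T \<and> x \<in> T \<and> (\<forall>y\<in>N \<inter> T. norm ((c - y) - (c - x)) \<le> B * norm (y - x))"
    by (rule exI[of _ UNIV], rule exI[of _ 1]) (auto simp: dist_norm norm_minus_commute)
qed

lemma ae_eq_rf:
  assumes "ae_eq u v" "\<sigma> \<noteq> 0"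
  shows "ae_eq (rf \<sigma> u) (rf \<sigma> v)"
proof -
  have "{x \<in> {0..2*pi}. rf \<sigma> u x \<noteq> rf \<sigma> v x} = (\<lambda>x. 2*pi - x) ` {x \<in> {0..2*pi}. u x \<noteq> v x}"
  proof (intro equalityI subsetI)
    fix y assume "y \<in> {x \<in> {0..2*pi}. rf \<sigma> u x \<noteq> rf \<sigma> v x}"
    then have "2*pi - y \<in> {x \<in> {0..2*pi}. u x \<noteq> v x}" "y = 2*pi - (2*pi - y)"
      using assms(2) by (auto simp: rf_def)
    then show "y \<in> (\<lambda>x. 2*pi - x) ` {x \<in> {0..2*pi}. u x \<noteq> v x}" by blast
  next
    fix y assume "y \<in> (\<lambda>x. 2*pi - x) ` {x \<in> {0..2*pi}. u x \<noteq> v x}"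
    then show "y \<in> {x \<in> {0..2*pi}. rf \<sigma> u x \<noteq> rf \<sigma> v x}"
      using assms(2) by (auto simp: rf_def)
  qed
  moreover have "negligible {x \<in> {0..2*pi}. u x \<noteq> v x}" using assms(1) unfolding ae_eq_def .
  ultimately show ?thesis unfolding ae_eq_def using negligible_refl by simp
qed

lemma L2norm_rf:
  assumes "\<bar>\<sigma>\<bar> = 1"
  shows "L2norm (rf \<sigma> h) = L2norm h"
proof -
  have "(\<lambda>x. (cmod (rf \<sigma> h x))^2) = (\<lambda>x. (\<lambda>y. (cmod (h y))^2) (2*pi - x))"
    using assms by (auto simp: rf_def norm_mult)
  then show ?thesis unfolding L2norm_def
    using integral_refl[where k="\<lambda>y. (cmod (h y))^2" and c="2*pi" and b="2*pi" and a=0] by simp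
qed

lemma L2norm_neg: "L2norm (\<lambda>x. - h x) = L2norm h"
  by (simp add: L2norm_def)

lemma per2pi_rf:
  assumes "per2pi h" shows "per2pi (rf \<sigma> h)"
  unfolding per2pi_def rf_def
proof
  fix x
  have "h (2 * pi - x - 2 * pi + 2 * pi) = h (2 * pi - x - 2*pi)"
    using assms unfolding per2pi_def by blast
  then show "complex_of_real \<sigma> * cnj (h (2 * pi - (x + 2 * pi))) = complex_of_real \<sigma> * cnj (h (2 * pi - x))"
    by (simp add: algebra_simps)
qed

lemma measurable_rf:
  assumes "h measurable_on {0..2*pi}"
  shows "rf \<sigma> h measurable_on {0..2*pi}"
proof -
  obtain N g where N: "negligible N" and g: "\<And>n. continuous_on UNIV (g n)"
    and lim: "\<And>x. x \<notin> N \<Longrightarrow> (\<lambda>n. g n x) \<longlonglongrightarrow> (if x \<in> {0..2*pi} then h x else 0)"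
    using assms unfolding measurable_on_def by blast
  show ?thesis unfolding measurable_on_def
  proof (intro exI conjI allI impI)
    show "negligible ((\<lambda>x. 2*pi - x) ` N)" using negligible_refl[OF N] .
    show "continuous_on UNIV (\<lambda>x. complex_of_real \<sigma> * cnj (g n (2*pi - x)))" for n
      by (intro continuous_intros continuous_on_compose2[OF g[of n]]) auto
    fix x assume "x \<notin> (\<lambda>x. 2*pi - x) ` N"
    then have "2*pi - x \<notin> N" using rev_image_eqI[of "2*pi - x" N x "\<lambda>x. 2*pi - x"] by auto
    from lim[OF this] have "(\<lambda>n. complex_of_real \<sigma> * cnj (g n (2*pi - x))) \<longlonglongrightarrow>
        complex_of_real \<sigma> * cnj (if 2*pi - x \<in> {0..2*pi} then h (2*pi - x) else 0)"
      by (intro tendsto_intros)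
    moreover have "(2*pi - x \<in> {0..2*pi}) = (x \<in> {0..2*pi})" by auto
    ultimately show "(\<lambda>n. complex_of_real \<sigma> * cnj (g n (2*pi - x))) \<longlonglongrightarrow>
        (if x \<in> {0..2*pi} then rf \<sigma> h x else 0)"
      by (auto simp: rf_def)
  qed
qed

lemma L2T_rf:
  assumes "L2T h" "\<bar>\<sigma>\<bar> = 1"
  shows "L2T (rf \<sigma> h)"
proof -
  have "(\<lambda>x. (cmod (rf \<sigma> h x))^2) = (\<lambda>x. (\<lambda>y. (cmod (h y))^2) (2*pi - x))"
    using assms by (auto simp: rf_def norm_mult)
  moreover have "(\<lambda>y. (cmod (h y))^2) integrable_on {0..2*pi}" using assms unfolding L2T_def by blast
  ultimately have "(\<lambda>x. (cmod (rf \<sigma> h x))^2) integrable_on {0..2*pi}"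
    using integrable_refl[where k="\<lambda>y. (cmod (h y))^2" and c="2*pi" and b="2*pi" and a=0] by simp
  then show ?thesis using assms per2pi_rf measurable_rf unfolding L2T_def by blast
qed


lemma rf_deriv:
  assumes "(F has_vector_derivative D) (at (2*pi - x))"
  shows "(rf \<sigma> F has_vector_derivative (- complex_of_real \<sigma> * cnj D)) (at x)"
proof -
  have "((\<lambda>x. complex_of_real \<sigma> * cnj (F (2*pi - x))) has_vector_derivative
      (complex_of_real \<sigma> * (- cnj D))) (at x)"
    by (rule has_vector_derivative_mult_right[OF refl_deriv[OF assms]])
  then show ?thesis by (simp add: rf_def[abs_def])
qed

lemma H3T_rf:
  assumes "H3T f f1 f2 f3"
  shows "H3T (rf 1 f) (rf (-1) f1) (rf 1 f2) (rf (-1) f3)"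
proof -
  have p: "per2pi f" and d1: "\<And>x. (f has_vector_derivative f1 x) (at x)"
    and d2: "\<And>x. (f1 has_vector_derivative f2 x) (at x)" and l: "L2T f3"
    and i: "\<And>x y. x \<le> y \<Longrightarrow> (f3 has_integral (f2 y - f2 x)) {x..y}"
    using assms unfolding H3T_def by blast+
  have "(rf 1 f has_vector_derivative rf (-1) f1 x) (at x)" for x
    using rf_deriv[OF d1[of "2*pi - x"], of 1] by (simp add: rf_def)
  moreover have "(rf (-1) f1 has_vector_derivative rf 1 f2 x) (at x)" for x
    using rf_deriv[OF d2[of "2*pi - x"], of "-1"] by (simp add: rf_def)
  moreover have "(rf (-1) f3 has_integral (rf 1 f2 y - rf 1 f2 x)) {x..y}" if "x \<le> y" for x y
  proof -
    have "(f3 has_integral (f2 (2*pi - x) - f2 (2*pi - y))) {2*pi - y..2*pi - x}"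
      using i that by simp
    from hi_refl[OF this, of "2*pi"]
    have "((\<lambda>s. f3 (2*pi - s)) has_integral (f2 (2*pi - x) - f2 (2*pi - y))) {x..y}" by simp
    then have "((cnj \<circ> (\<lambda>s. f3 (2*pi - s))) has_integral cnj (f2 (2*pi - x) - f2 (2*pi - y))) {x..y}"
      using has_integral_cnj by blast
    from has_integral_neg[OF this]
    show ?thesis by (simp add: rf_def[abs_def] o_def)
  qed
  ultimately show ?thesis
    unfolding H3T_def using per2pi_rf[OF p] L2T_rf[OF l, of "-1"] by simp
qed

lemma Dinv_rf:
  assumes q: "exp (\<i> * complex_of_real t * of_real (2*pi)) \<noteq> 1"
    and hp: "per2pi h" and hc: "continuous_on UNIV h"
  shows "Dinv t (rf 1 h) = rf (-1) (Dinv t h)"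
proof -
  have P: "Psol t h (Dinv t h)" by (rule Dinv_Psol[OF q hp hc])
  have hc': "continuous_on UNIV (rf 1 h)"
    unfolding rf_def[abs_def] by (intro continuous_intros continuous_on_compose2[OF hc]) auto
  have P1: "Psol t (rf 1 h) (Dinv t (rf 1 h))" by (rule Dinv_Psol[OF q per2pi_rf[OF hp] hc'])
  have "Psol t (rf 1 h) (rf (-1) (Dinv t h))"
    unfolding Psol_def
  proof (intro conjI allI)
    show "per2pi (rf (-1) (Dinv t h))" using P per2pi_rf unfolding Psol_def by blast
    fix x
    have "(Dinv t h has_vector_derivative (h (2*pi - x) - \<i> * complex_of_real t * Dinv t h (2*pi - x))) (at (2*pi - x))"
      using P unfolding Psol_def by blast
    from rf_deriv[OF this, of "-1"]
    show "(rf (-1) (Dinv t h) has_vector_derivative (rf 1 h x - \<i> * complex_of_real t * rf (-1) (Dinv t h) x)) (at x)"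
      by (simp add: rf_def)
  qed
  then show ?thesis using Psol_unique[OF q P1] by simp
qed

lemma w_sym:
  assumes "smooth_fun w" "per2pi w" "\<And>z. w (- z) = w z"
  shows "w (2*pi - x) = w x" "deriv w (2*pi - x) = - deriv w x"
proof -
  have ws: "w (2*pi - x) = w x" for x
  proof -
    have "w (-x + 2*pi) = w (-x)" using assms(2) unfolding per2pi_def by blast
    then show ?thesis using assms(3) by simp
  qed
  then show "w (2*pi - x) = w x" .
  obtain D where D0: "D 0 = w" and D: "\<And>n x. (D n has_real_derivative D (Suc n) x) (at x)"
    using assms(1) unfolding smooth_fun_def by blast
  have dw: "(w has_real_derivative D 1 y) (at y)" for y using D[of 0 y] D0 by simp
  have "((\<lambda>y. w (2*pi - y)) has_real_derivative (D 1 (2*pi - x) * (-1))) (at x)"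
    by (rule DERIV_chain2[OF dw]) (auto intro!: derivative_eq_intros)
  then have "(w has_real_derivative (- D 1 (2*pi - x))) (at x)" using ws by simp
  then have "D 1 x = - D 1 (2*pi - x)" using dw DERIV_unique by blast
  moreover have "deriv w y = D 1 y" for y using dw by (rule DERIV_imp_deriv)
  ultimately show "deriv w (2*pi - x) = - deriv w x" by simp
qed


lemma Hop_rf:
  assumes ws: "\<And>x. w (2*pi - x) = w x" and dws: "\<And>x. deriv w (2*pi - x) = - deriv w x"
    and Di: "Dinv \<tau> (rf 1 f) = rf (-1) (Dinv \<tau> f)"
  shows "Hop k c \<rho> \<phi> \<gamma> w \<tau> (rf 1 f) (rf (-1) f1) (rf 1 f2) (rf (-1) f3) x - (- cnj \<mu>) * rf 1 f x
     = rf (-1) (\<lambda>x. Hop k c \<rho> \<phi> \<gamma> w \<tau> f f1 f2 f3 x - \<mu> * f x) x"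
proof -
  have w1: "w x = w (2*pi - x)" and w2: "deriv w x = - deriv w (2*pi - x)"
    using ws[of x] dws[of x] by simp_all
  show ?thesis
    unfolding Hop_def Let_def Di rf_def w1 w2
    by (simp add: algebra_simps power2_eq_square power3_eq_cube)
qed


lemma H3T_per_cont:
  assumes "H3T f f1 f2 f3"
  shows "per2pi f" "continuous_on UNIV f"
proof -
  show "per2pi f" using assms unfolding H3T_def by blast
  have "\<And>x. (f has_vector_derivative f1 x) (at x)" using assms unfolding H3T_def by blast
  then have "\<And>x. isCont f x" using has_vector_derivative_continuous by blast
  then show "continuous_on UNIV f" by (simp add: continuous_at_imp_continuous_on)
qed

lemma resolvent_rf:
  assumes q: "exp (\<i> * complex_of_real \<tau> * of_real (2*pi)) \<noteq> 1"
    and ws: "\<And>x. w (2*pi - x) = w x" and dws: "\<And>x. deriv w (2*pi - x) = - deriv w x"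
    and \<nu>: "\<nu> \<in> resolvent_H k c \<rho> \<phi> \<gamma> w \<tau>"
  shows "- cnj \<nu> \<in> resolvent_H k c \<rho> \<phi> \<gamma> w \<tau>"
proof -
  let ?H = "Hop k c \<rho> \<phi> \<gamma> w \<tau>"
  have KI: "(\<lambda>x. ?H (rf 1 f) (rf (-1) f1) (rf 1 f2) (rf (-1) f3) x - (- cnj \<mu>) * rf 1 f x)
     = rf (-1) (\<lambda>x. ?H f f1 f2 f3 x - \<mu> * f x)" if "H3T f f1 f2 f3" for f f1 f2 f3 \<mu>
  proof
    fix x
    have "Dinv \<tau> (rf 1 f) = rf (-1) (Dinv \<tau> f)"
      using Dinv_rf[OF q H3T_per_cont[OF that]] .
    from Hop_rf[OF ws dws this] show "?H (rf 1 f) (rf (-1) f1) (rf 1 f2) (rf (-1) f3) x - (- cnj \<mu>) * rf 1 f x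
     = rf (-1) (\<lambda>x. ?H f f1 f2 f3 x - \<mu> * f x) x" .
  qed
  have R1: "\<And>g. L2T g \<Longrightarrow> \<exists>f f1 f2 f3. H3T f f1 f2 f3 \<and> ae_eq (\<lambda>x. ?H f f1 f2 f3 x - \<nu> * f x) g"
   and R2: "\<And>f f1 f2 f3. H3T f f1 f2 f3 \<Longrightarrow> ae_eq (\<lambda>x. ?H f f1 f2 f3 x - \<nu> * f x) (\<lambda>x. 0) \<Longrightarrow> ae_eq f (\<lambda>x. 0)"
   and R3: "\<exists>C. \<forall>f f1 f2 f3. H3T f f1 f2 f3 \<longrightarrow> L2norm f \<le> C * L2norm (\<lambda>x. ?H f f1 f2 f3 x - \<nu> * f x)"
    using \<nu> unfolding resolvent_H_def by blast+
  have S1: "\<exists>f f1 f2 f3. H3T f f1 f2 f3 \<and> ae_eq (\<lambda>x. ?H f f1 f2 f3 x - (- cnj \<nu>) * f x) g" if g: "L2T g" for g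
  proof -
    obtain f f1 f2 f3 where H: "H3T f f1 f2 f3" and ae: "ae_eq (\<lambda>x. ?H f f1 f2 f3 x - \<nu> * f x) (rf (-1) g)"
      using R1[OF L2T_rf[OF g, of "-1"]] by auto
    have "ae_eq (rf (-1) (\<lambda>x. ?H f f1 f2 f3 x - \<nu> * f x)) (rf (-1) (rf (-1) g))"
      using ae_eq_rf[OF ae] by simp
    then have "ae_eq (\<lambda>x. ?H (rf 1 f) (rf (-1) f1) (rf 1 f2) (rf (-1) f3) x - (- cnj \<nu>) * rf 1 f x) g"
      unfolding KI[OF H] using rf_1_1 by simp
    then show ?thesis using H3T_rf[OF H] by blast
  qed
  have S2: "ae_eq f (\<lambda>x. 0)" if H: "H3T f f1 f2 f3"
    and ae: "ae_eq (\<lambda>x. ?H f f1 f2 f3 x - (- cnj \<nu>) * f x) (\<lambda>x. 0)" for f f1 f2 f3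
  proof -
    have "ae_eq (rf (-1) (\<lambda>x. ?H f f1 f2 f3 x - (- cnj \<nu>) * f x)) (rf (-1) (\<lambda>x. 0))"
      using ae_eq_rf[OF ae] by simp
    then have "ae_eq (\<lambda>x. ?H (rf 1 f) (rf (-1) f1) (rf 1 f2) (rf (-1) f3) x - \<nu> * rf 1 f x) (\<lambda>x. 0)"
      using KI[OF H, of "- cnj \<nu>"] by (simp add: rf_0)
    then have "ae_eq (rf 1 f) (\<lambda>x. 0)" using R2[OF H3T_rf[OF H]] by blast
    from ae_eq_rf[OF this, of 1] show ?thesis by (simp add: rf_1_1 rf_0)
  qed
  obtain C where C: "\<And>f f1 f2 f3. H3T f f1 f2 f3 \<Longrightarrow> L2norm f \<le> C * L2norm (\<lambda>x. ?H f f1 f2 f3 x - \<nu> * f x)"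
    using R3 by blast
  have S3: "L2norm f \<le> C * L2norm (\<lambda>x. ?H f f1 f2 f3 x - (- cnj \<nu>) * f x)" if H: "H3T f f1 f2 f3" for f f1 f2 f3
  proof -
    have "L2norm f = L2norm (rf 1 f)" by (simp add: L2norm_rf)
    also have "\<dots> \<le> C * L2norm (\<lambda>x. ?H (rf 1 f) (rf (-1) f1) (rf 1 f2) (rf (-1) f3) x - \<nu> * rf 1 f x)"
      using C[OF H3T_rf[OF H]] .
    also have "(\<lambda>x. ?H (rf 1 f) (rf (-1) f1) (rf 1 f2) (rf (-1) f3) x - \<nu> * rf 1 f x)
        = rf (-1) (\<lambda>x. ?H f f1 f2 f3 x - (- cnj \<nu>) * f x)"
      using KI[OF H, of "- cnj \<nu>"] by simp
    also have "L2norm (rf (-1) (\<lambda>x. ?H f f1 f2 f3 x - (- cnj \<nu>) * f x))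
        = L2norm (\<lambda>x. ?H f f1 f2 f3 x - (- cnj \<nu>) * f x)" by (simp add: L2norm_rf)
    finally show ?thesis .
  qed
  show ?thesis unfolding resolvent_H_def using S1 S2 S3 by blast
qed

lemma q_ne_1:
  assumes "-1/2 < \<tau>" "\<tau> \<le> 1/2" "\<tau> \<noteq> 0"
  shows "exp (\<i> * complex_of_real \<tau> * of_real (2*pi)) \<noteq> 1"
proof
  assume "exp (\<i> * complex_of_real \<tau> * of_real (2*pi)) = 1"
  then obtain n :: int where n: "\<tau> * (2*pi) = of_int (2 * n) * pi"
    by (auto simp: exp_eq_1)
  then have "\<tau> = of_int n" by (simp add: field_simps)
  with assms show False by auto
qed

theorem lemma2p4:
  fixes k \<rho> \<phi> \<gamma> :: real
    and w :: "real \<Rightarrow> real \<Rightarrow> real" \<comment> \<open>w a z: the wave profile of amplitude a\<close>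
    and c :: "real \<Rightarrow> real" \<comment> \<open>c a: its speed\<close>
  assumes k_pos: "k > 0"
    and w_smooth: "\<And>a. smooth_fun (w a)"
    and w_per: "\<And>a. per2pi (w a)"
    and w_even: "\<And>a z. w a (- z) = w a z"
    and w_exp: "\<exists>C a0. a0 > 0 \<and> (\<forall>a z. \<bar>a\<bar> < a0 \<longrightarrow>
        \<bar>w a z - (a * cos z + a^2 * (- 3 * \<rho> / (2 * k^2) + \<rho> / (2 * k^2) * cos (2 * z))
           + a^3 * (- (\<phi>^2) / (64 * k^2) + 3 * \<rho>^2 / (16 * k^4)) * cos (3 * z))\<bar> \<le> C * a^4)"
    and c_exp: "\<exists>C a0. a0 > 0 \<and> (\<forall>a. \<bar>a\<bar> < a0 \<longrightarrow>
        \<bar>c a - (k^2 + a^2 * (3 * \<phi>^2 / 8 + 15 * \<rho>^2 / (2 * k^2)))\<bar> \<le> C * a^4)"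
  shows "\<exists>\<epsilon>>0. \<forall>a. \<bar>a\<bar> < \<epsilon> \<longrightarrow>
     (\<forall>\<tau>. -1/2 < \<tau> \<and> \<tau> \<le> 1/2 \<and> \<tau> \<noteq> 0 \<longrightarrow>
       (\<forall>\<mu>. \<mu> \<in> spectrum_H k (c a) \<rho> \<phi> \<gamma> (w a) \<tau> \<longrightarrow>
             - cnj \<mu> \<in> spectrum_H k (c a) \<rho> \<phi> \<gamma> (w a) \<tau>))"
proof (intro exI[of _ 1] conjI allI impI)
  fix a \<tau> \<mu>
  assume t: "-1/2 < \<tau> \<and> \<tau> \<le> 1/2 \<and> \<tau> \<noteq> 0"
    and mu: "\<mu> \<in> spectrum_H k (c a) \<rho> \<phi> \<gamma> (w a) \<tau>"
  have q: "exp (\<i> * complex_of_real \<tau> * of_real (2*pi)) \<noteq> 1" using q_ne_1 t by blast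
  note ws = w_sym[OF w_smooth w_per w_even]
  show "- cnj \<mu> \<in> spectrum_H k (c a) \<rho> \<phi> \<gamma> (w a) \<tau>"
    unfolding spectrum_H_def
  proof (rule ComplI)
    assume "- cnj \<mu> \<in> resolvent_H k (c a) \<rho> \<phi> \<gamma> (w a) \<tau>"
    from resolvent_rf[OF q ws this] have "\<mu> \<in> resolvent_H k (c a) \<rho> \<phi> \<gamma> (w a) \<tau>" by simp
    with mu show False unfolding spectrum_H_def by simp
  qed
qed simp

end
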